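(* In the setting below, $\tilde p_2\,p^s\,\pi=0$ on $\operatorname{Char}P$.
   Context: $\rho,p:\mathbb R^3\to\mathbb R$, $H:\mathbb R^3\to\mathbb R^3$ are smooth, time-independent, $\rho>0$, $\gamma$ constant, with the stationary equilibrium relation $\nabla p+H\times\operatorname{curl}H=0$; $c^2=\gamma p/\rho>0$, $0<|H|^2\ne\rho c^2$, and only points with $\xi\cdot H\neq0$, $\xi\times H\ne0$ are considered. $P$ is the $3\times3$ operator on $\mathbb R_t\times\mathbb R^3_x$: $P\beta=-\rho\partial_t^2\beta+\gamma\nabla(p\operatorname{div}\beta)+\nabla(\beta\cdot\nabla p)+(\nabla\times(\nabla\times(\beta\times H)))\times H+(\nabla\times H)\times(\nabla\times(\beta\times H))$. Its full symbol (convention $\partial\mapsto i\xi$, i.e. $P(e^{i(t\tau+x\cdot\xi)}v)=e^{i(t\tau+x\cdot\xi)}(p_2+p_1+p_0)v$) is $p_2+p_1+p_0$, $p_j$ homogeneous of degree $j$ in $(\tau,\xi)$, with $p_2=(\rho\tau^2-(H\cdot\xi)^2)\operatorname{Id}_3-(\gamma p+|H|^2)\xi\otimes\xi+(H\cdot\xi)(\xi\otimes H+H\otimes\xi)$. The subprincipal symbol is $p^s=p_1-\frac1{2i}\sum_j\partial_{x_j}\partial_{\xi_j}p_2$. Let $q_1=\rho\tau^2-(H\cdot\xi)^2$, $q_2=\rho(\tau^2-c_s^2)$, $q_3=\rho(\tau^2-c_f^2)$ with $c_{f,s}^2(x,\xi)=\tfrac12\big((c^2+h^2)|\xi|^2\pm\sqrt{(c^2-h^2)^2|\xi|^4+4b^2c^2|\xi|^2}\big)$,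 $h^2=|H|^2/\rho$, $b^2=|\xi\times H|^2/\rho$; $\operatorname{Char}P=\{q_1=0\}\cup\{q_2=0\}\cup\{q_3=0\}$. Let $w^2=|H|^2\xi\otimes\xi+|\xi|^2H\otimes H-(H\cdot\xi)(H\otimes\xi+\xi\otimes H)$, $\pi_1=\operatorname{Id}_3+\frac{w^2}{(H\cdot\xi)^2-|H|^2|\xi|^2}$, $\pi_2=\frac{1}{\rho c_s^2-\rho c_f^2}\Big((\gamma p+|H|^2)\xi\otimes\xi-(H\cdot\xi)(\xi\otimes H+H\otimes\xi)+\frac{(H\cdot\xi)^2w^2}{\rho c_s^2-(H\cdot\xi)^2}\Big)$, $\pi_3=\frac{1}{\rho c_f^2-\rho c_s^2}\Big((\gamma p+|H|^2)\xi\otimes\xi-(H\cdot\xi)(\xi\otimes H+H\otimes\xi)+\frac{(H\cdot\xi)^2w^2}{\rho c_f^2-(H\cdot\xi)^2}\Big)$. With $\Gamma_1,\Gamma_2,\Gamma_3$ pairwise disjoint conic neighborhoods of $\{q_1=0\},\{q_2=0\},\{q_3=0\}$, on $\Gamma_j$ set $\pi=\pi_j$ and $\tilde p_2=\pi_j+\sum_{k\ne j}\frac{q_j}{q_k}\pi_k$ (so $\tilde p_2p_2=q_j\operatorname{Id}_3$ there). *)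

theory Defs
  imports "HOL-Analysis.Analysis"
begin

definition pd :: "(real^3 \<Rightarrow> 'b::real_normed_vector) \<Rightarrow> 3 \<Rightarrow> real^3 \<Rightarrow> 'b" where
  "pd f j x = vector_derivative (\<lambda>s. f (x + s *\<^sub>R axis j 1)) (at 0)"

inductive_set pderivs :: "(real^3 \<Rightarrow> 'b::real_normed_vector) \<Rightarrow> (real^3 \<Rightarrow> 'b) set"
  for f where
  base: "f \<in> pderivs f"
| step: "g \<in> pderivs f \<Longrightarrow> (\<lambda>x. pd g j x) \<in> pderivs f"

definition smooth3 :: "(real^3 \<Rightarrow> 'b::real_normed_vector) \<Rightarrow> bool" where
  "smooth3 f \<longleftrightarrow> (\<forall>g\<in>pderivs f. continuous_on UNIV g \<and> (\<forall>x. g differentiable (at x)))"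

definition grad3 :: "(real^3 \<Rightarrow> 'a::real_normed_vector) \<Rightarrow> real^3 \<Rightarrow> 'a^3" where
  "grad3 f x = (\<chi> j. pd f j x)"

definition div3 :: "(real^3 \<Rightarrow> 'a::real_normed_vector^3) \<Rightarrow> real^3 \<Rightarrow> 'a" where
  "div3 F x = (\<Sum>j\<in>UNIV. pd (\<lambda>y. F y $ j) j x)"

definition curl3 :: "(real^3 \<Rightarrow> 'a::real_normed_vector^3) \<Rightarrow> real^3 \<Rightarrow> 'a^3" where
  "curl3 F x = vector [pd (\<lambda>y. F y $ 3) 2 x - pd (\<lambda>y. F y $ 2) 3 x,
                       pd (\<lambda>y. F y $ 1) 3 x - pd (\<lambda>y. F y $ 3) 1 x,
                       pd (\<lambda>y. F y $ 2) 1 x - pd (\<lambda>y. F y $ 1) 2 x]"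

definition crossv :: "'a::ring^3 \<Rightarrow> 'a^3 \<Rightarrow> 'a^3" where
  "crossv u v = vector [u$2 * v$3 - u$3 * v$2, u$3 * v$1 - u$1 * v$3, u$1 * v$2 - u$2 * v$1]"

definition cvec :: "real^3 \<Rightarrow> complex^3" where
  "cvec v = (\<chi> i. complex_of_real (v $ i))"

definition cmat :: "real^3^3 \<Rightarrow> complex^3^3" where
  "cmat M = (\<chi> i j. complex_of_real (M $ i $ j))"

definition cscale :: "complex \<Rightarrow> complex^3 \<Rightarrow> complex^3" where
  "cscale c v = (\<chi> i. c * v $ i)"

definition cmscale :: "complex \<Rightarrow> complex^3^3 \<Rightarrow> complex^3^3" where
  "cmscale c M = (\<chi> i j. c * M $ i $ j)"

definition outer :: "real^3 \<Rightarrow> real^3 \<Rightarrow> real^3^3" where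
  "outer u v = (\<chi> i j. u $ i * v $ j)"

section \<open>The operator P and its full symbol\<close>

definition dt :: "(real \<Rightarrow> real^3 \<Rightarrow> complex^3) \<Rightarrow> real \<Rightarrow> real^3 \<Rightarrow> complex^3" where
  "dt \<beta> t x = vector_derivative (\<lambda>s. \<beta> (t + s) x) (at 0)"

definition Pop :: "(real^3 \<Rightarrow> real) \<Rightarrow> (real^3 \<Rightarrow> real) \<Rightarrow> (real^3 \<Rightarrow> real^3) \<Rightarrow> real
     \<Rightarrow> (real \<Rightarrow> real^3 \<Rightarrow> complex^3) \<Rightarrow> real \<Rightarrow> real^3 \<Rightarrow> complex^3" where
  "Pop \<rho> p H \<gamma> \<beta> t x =
     cscale (- complex_of_real (\<rho> x)) (dt (dt \<beta>) t x)
   + cscale (complex_of_real \<gamma>) (grad3 (\<lambda>y. complex_of_real (p y) * div3 (\<beta> t) y) x)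
   + grad3 (\<lambda>y. \<Sum>j\<in>UNIV. \<beta> t y $ j * complex_of_real (pd p j y)) x
   + crossv (curl3 (curl3 (\<lambda>y. crossv (\<beta> t y) (cvec (H y)))) x) (cvec (H x))
   + crossv (curl3 (\<lambda>y. cvec (H y)) x) (curl3 (\<lambda>y. crossv (\<beta> t y) (cvec (H y))) x)"

text \<open>Full symbol sigma(x,tau,xi), convention d -> i xi:
  P(e^{i(t tau + x.xi)} v) = e^{i(t tau + x.xi)} sigma v.  Column k is obtained with v = e_k,
  evaluated at t = 0 (coefficients are time independent).\<close>
definition fullsym :: "(real^3 \<Rightarrow> real) \<Rightarrow> (real^3 \<Rightarrow> real) \<Rightarrow> (real^3 \<Rightarrow> real^3) \<Rightarrow> real
     \<Rightarrow> real^3 \<Rightarrow> real \<Rightarrow> real^3 \<Rightarrow> complex^3^3" where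
  "fullsym \<rho> p H \<gamma> x \<tau> \<xi> = (\<chi> i k.
     exp (- \<i> * complex_of_real (x \<bullet> \<xi>)) *
     Pop \<rho> p H \<gamma> (\<lambda>t y. cscale (exp (\<i> * complex_of_real (t * \<tau> + y \<bullet> \<xi>))) (axis k 1)) 0 x $ i)"

text \<open>The full symbol is p2 + p1 + p0 with p_j homogeneous of degree j in (tau, xi);
  p2, p0 are even and p1 odd, so p1 is the odd part of the full symbol.\<close>
definition p1sym :: "(real^3 \<Rightarrow> real) \<Rightarrow> (real^3 \<Rightarrow> real) \<Rightarrow> (real^3 \<Rightarrow> real^3) \<Rightarrow> real
     \<Rightarrow> real^3 \<Rightarrow> real \<Rightarrow> real^3 \<Rightarrow> complex^3^3" where
  "p1sym \<rho> p H \<gamma> x \<tau> \<xi> = (1/2) *\<^sub>R (fullsym \<rho> p H \<gamma> x \<tau> \<xi> - fullsym \<rho> p H \<gamma> x (-\<tau>) (-\<xi>))"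

definition p2sym :: "(real^3 \<Rightarrow> real) \<Rightarrow> (real^3 \<Rightarrow> real) \<Rightarrow> (real^3 \<Rightarrow> real^3) \<Rightarrow> real
     \<Rightarrow> real^3 \<Rightarrow> real \<Rightarrow> real^3 \<Rightarrow> real^3^3" where
  "p2sym \<rho> p H \<gamma> x \<tau> \<xi> =
     (\<rho> x * \<tau>^2 - (H x \<bullet> \<xi>)^2) *\<^sub>R mat 1
     - (\<gamma> * p x + (norm (H x))^2) *\<^sub>R outer \<xi> \<xi>
     + (H x \<bullet> \<xi>) *\<^sub>R (outer \<xi> (H x) + outer (H x) \<xi>)"

definition psub :: "(real^3 \<Rightarrow> real) \<Rightarrow> (real^3 \<Rightarrow> real) \<Rightarrow> (real^3 \<Rightarrow> real^3) \<Rightarrow> real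
     \<Rightarrow> real^3 \<Rightarrow> real \<Rightarrow> real^3 \<Rightarrow> complex^3^3" where
  "psub \<rho> p H \<gamma> x \<tau> \<xi> = p1sym \<rho> p H \<gamma> x \<tau> \<xi>
     - cmscale (1 / (2 * \<i>))
         (cmat (\<Sum>j\<in>UNIV. pd (\<lambda>y. pd (\<lambda>\<eta>. p2sym \<rho> p H \<gamma> y \<tau> \<eta>) j \<xi>) j x))"

section \<open>Characteristic factors and projections\<close>

definition csq :: "(real^3 \<Rightarrow> real) \<Rightarrow> (real^3 \<Rightarrow> real) \<Rightarrow> real \<Rightarrow> real^3 \<Rightarrow> real" where
  "csq \<rho> p \<gamma> x = \<gamma> * p x / \<rho> x"

definition hsq :: "(real^3 \<Rightarrow> real) \<Rightarrow> (real^3 \<Rightarrow> real^3) \<Rightarrow> real^3 \<Rightarrow> real" where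
  "hsq \<rho> H x = (norm (H x))^2 / \<rho> x"

definition bsq :: "(real^3 \<Rightarrow> real) \<Rightarrow> (real^3 \<Rightarrow> real^3) \<Rightarrow> real^3 \<Rightarrow> real^3 \<Rightarrow> real" where
  "bsq \<rho> H x \<xi> = (norm (crossv \<xi> (H x)))^2 / \<rho> x"

definition discr :: "(real^3 \<Rightarrow> real) \<Rightarrow> (real^3 \<Rightarrow> real) \<Rightarrow> (real^3 \<Rightarrow> real^3) \<Rightarrow> real
     \<Rightarrow> real^3 \<Rightarrow> real^3 \<Rightarrow> real" where
  "discr \<rho> p H \<gamma> x \<xi> = sqrt ((csq \<rho> p \<gamma> x - hsq \<rho> H x)^2 * (norm \<xi>)^4
        + 4 * bsq \<rho> H x \<xi> * csq \<rho> p \<gamma> x * (norm \<xi>)^2)"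

definition cfsq :: "(real^3 \<Rightarrow> real) \<Rightarrow> (real^3 \<Rightarrow> real) \<Rightarrow> (real^3 \<Rightarrow> real^3) \<Rightarrow> real
     \<Rightarrow> real^3 \<Rightarrow> real^3 \<Rightarrow> real" where
  "cfsq \<rho> p H \<gamma> x \<xi> = ((csq \<rho> p \<gamma> x + hsq \<rho> H x) * (norm \<xi>)^2 + discr \<rho> p H \<gamma> x \<xi>) / 2"

definition cssq :: "(real^3 \<Rightarrow> real) \<Rightarrow> (real^3 \<Rightarrow> real) \<Rightarrow> (real^3 \<Rightarrow> real^3) \<Rightarrow> real
     \<Rightarrow> real^3 \<Rightarrow> real^3 \<Rightarrow> real" where
  "cssq \<rho> p H \<gamma> x \<xi> = ((csq \<rho> p \<gamma> x + hsq \<rho> H x) * (norm \<xi>)^2 - discr \<rho> p H \<gamma> x \<xi>) / 2"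

definition qfac :: "(real^3 \<Rightarrow> real) \<Rightarrow> (real^3 \<Rightarrow> real) \<Rightarrow> (real^3 \<Rightarrow> real^3) \<Rightarrow> real
     \<Rightarrow> nat \<Rightarrow> real^3 \<Rightarrow> real \<Rightarrow> real^3 \<Rightarrow> real" where
  "qfac \<rho> p H \<gamma> j x \<tau> \<xi> =
     (if j = 1 then \<rho> x * \<tau>^2 - (H x \<bullet> \<xi>)^2
      else if j = 2 then \<rho> x * (\<tau>^2 - cssq \<rho> p H \<gamma> x \<xi>)
      else \<rho> x * (\<tau>^2 - cfsq \<rho> p H \<gamma> x \<xi>))"

definition wsq :: "(real^3 \<Rightarrow> real^3) \<Rightarrow> real^3 \<Rightarrow> real^3 \<Rightarrow> real^3^3" where
  "wsq H x \<xi> = (norm (H x))^2 *\<^sub>R outer \<xi> \<xi> + (norm \<xi>)^2 *\<^sub>R outer (H x) (H x)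
       - (H x \<bullet> \<xi>) *\<^sub>R (outer (H x) \<xi> + outer \<xi> (H x))"

definition proj :: "(real^3 \<Rightarrow> real) \<Rightarrow> (real^3 \<Rightarrow> real) \<Rightarrow> (real^3 \<Rightarrow> real^3) \<Rightarrow> real
     \<Rightarrow> nat \<Rightarrow> real^3 \<Rightarrow> real^3 \<Rightarrow> real^3^3" where
  "proj \<rho> p H \<gamma> j x \<xi> =
     (let A = (\<gamma> * p x + (norm (H x))^2) *\<^sub>R outer \<xi> \<xi>
              - (H x \<bullet> \<xi>) *\<^sub>R (outer \<xi> (H x) + outer (H x) \<xi>);
          rs = \<rho> x * cssq \<rho> p H \<gamma> x \<xi>;
          rf = \<rho> x * cfsq \<rho> p H \<gamma> x \<xi>;
          hx = (H x \<bullet> \<xi>)^2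
      in if j = 1 then mat 1 + (1 / (hx - (norm (H x))^2 * (norm \<xi>)^2)) *\<^sub>R wsq H x \<xi>
         else if j = 2 then (1 / (rs - rf)) *\<^sub>R (A + (hx / (rs - hx)) *\<^sub>R wsq H x \<xi>)
         else (1 / (rf - rs)) *\<^sub>R (A + (hx / (rf - hx)) *\<^sub>R wsq H x \<xi>))"

definition ptilde :: "(real^3 \<Rightarrow> real) \<Rightarrow> (real^3 \<Rightarrow> real) \<Rightarrow> (real^3 \<Rightarrow> real^3) \<Rightarrow> real
     \<Rightarrow> nat \<Rightarrow> real^3 \<Rightarrow> real \<Rightarrow> real^3 \<Rightarrow> real^3^3" where
  "ptilde \<rho> p H \<gamma> j x \<tau> \<xi> = proj \<rho> p H \<gamma> j x \<xi>
     + (\<Sum>k\<in>{1,2,3} - {j}. (qfac \<rho> p H \<gamma> j x \<tau> \<xi> / qfac \<rho> p H \<gamma> k x \<tau> \<xi>) *\<^sub>R proj \<rho> p H \<gamma> k x \<xi>)"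

end

theory Submission
  imports Defs
begin


lemma pd_has:
  assumes "(f has_derivative f') (at x)"
  shows "pd f j x = f' (axis j 1)"
proof -
  have "((\<lambda>s::real. x + s *\<^sub>R axis j 1) has_derivative (\<lambda>s. s *\<^sub>R axis j 1)) (at 0)"
    by (auto intro!: derivative_eq_intros)
  then have "((\<lambda>s. f (x + s *\<^sub>R axis j 1)) has_derivative (\<lambda>s. f' (s *\<^sub>R axis j 1))) (at 0)"
    using has_derivative_compose[of "\<lambda>s::real. x + s *\<^sub>R axis j 1" _ 0 UNIV f f'] assms by simp
  moreover have "(\<lambda>s. f' (s *\<^sub>R axis j 1)) = (\<lambda>s. s *\<^sub>R f' (axis j 1))"
    using assms has_derivative_bounded_linear linear_cmul[of f'] bounded_linear.linear by blast
  ultimately show ?thesis unfolding pd_def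
    by (intro vector_derivative_at) (simp add: has_vector_derivative_def)
qed

lemma pd_lin:
  assumes L: "bounded_linear L" and f: "f differentiable (at x)"
  shows "pd (\<lambda>y. L (f y)) j x = L (pd f j x)"
proof -
  obtain f' where f': "(f has_derivative f') (at x)" using f by (auto simp: differentiable_def)
  have "((\<lambda>y. L (f y)) has_derivative (\<lambda>h. L (f' h))) (at x)"
    using bounded_linear.has_derivative[OF L f'] .
  then show ?thesis using pd_has[OF f'] pd_has by metis
qed

lemma pd_bil:
  assumes b: "bounded_bilinear b" and f: "f differentiable (at x)" and g: "g differentiable (at x)"
  shows "pd (\<lambda>y. b (f y) (g y)) j x = b (pd f j x) (g x) + b (f x) (pd g j x)"
proof -
  obtain f' where f': "(f has_derivative f') (at x)" using f by (auto simp: differentiable_def)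
  obtain g' where g': "(g has_derivative g') (at x)" using g by (auto simp: differentiable_def)
  have "((\<lambda>y. b (f y) (g y)) has_derivative (\<lambda>h. b (f x) (g' h) + b (f' h) (g x))) (at x)"
    using bounded_bilinear.FDERIV[OF b f' g'] .
  then show ?thesis using pd_has[OF f'] pd_has[OF g'] pd_has by (metis add.commute)
qed

lemma lin_differentiable:
  assumes L: "bounded_linear L" and f: "f differentiable (at x)"
  shows "(\<lambda>y. L (f y)) differentiable (at x)"
  using bounded_linear.has_derivative[OF L] f by (auto simp: differentiable_def)

lemma bil_differentiable:
  assumes b: "bounded_bilinear b" and f: "f differentiable (at x)" and g: "g differentiable (at x)"
  shows "(\<lambda>y. b (f y) (g y)) differentiable (at x)"
proof -
  obtain f' where f': "(f has_derivative f') (at x)" using f by (auto simp: differentiable_def)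
  obtain g' where g': "(g has_derivative g') (at x)" using g by (auto simp: differentiable_def)
  show ?thesis using bounded_bilinear.FDERIV[OF b f' g'] by (auto simp: differentiable_def)
qed

lemma bil_crossv: "bounded_bilinear (crossv :: real^3 \<Rightarrow> real^3 \<Rightarrow> real^3)"
proof -
  have "bilinear (crossv :: real^3 \<Rightarrow> real^3 \<Rightarrow> real^3)"
    unfolding bilinear_def
    by (auto intro!: linearI simp: crossv_def vec_eq_iff algebra_simps forall_3)
  then show ?thesis using bilinear_conv_bounded_bilinear by blast
qed

lemma bil_outer: "bounded_bilinear outer"
proof -
  have "bilinear outer"
    unfolding bilinear_def
    by (auto intro!: linearI simp: outer_def vec_eq_iff algebra_simps)
  then show ?thesis using bilinear_conv_bounded_bilinear by blast
qed

lemma bil_cscale: "bounded_bilinear cscale"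
proof -
  have "bilinear cscale"
    unfolding bilinear_def
    by (auto intro!: linearI simp: cscale_def vec_eq_iff algebra_simps)
  then show ?thesis using bilinear_conv_bounded_bilinear by blast
qed

lemma lin_cvec: "bounded_linear cvec"
proof -
  have "linear cvec" apply (auto intro!: linearI simp: cvec_def vec_eq_iff)
    by (simp add: scaleR_conv_of_real)
  then show ?thesis using linear_conv_bounded_linear by blast
qed


lemma lin_scaleR_left: "bounded_linear (\<lambda>r::real. r *\<^sub>R (c::'a::real_normed_vector))"
  by (rule bounded_linear_scaleR_left)

lemma pd_const[simp]: "pd (\<lambda>y. c) j x = 0"
  using pd_has[of "\<lambda>y. c" "\<lambda>h. 0" x j] by simp

lemma pd_ident[simp]: "pd (\<lambda>y. y) j x = axis j 1"
  using pd_has[of "\<lambda>y. y" "\<lambda>h. h" x j] by simp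

lemma pd_add[simp]:
  assumes "f differentiable (at x)" "g differentiable (at x)"
  shows "pd (\<lambda>y. f y + g y) j x = pd f j x + pd g j x"
proof -
  obtain f' where f': "(f has_derivative f') (at x)" using assms by (auto simp: differentiable_def)
  obtain g' where g': "(g has_derivative g') (at x)" using assms by (auto simp: differentiable_def)
  show ?thesis using pd_has[OF has_derivative_add[OF f' g']] pd_has[OF f'] pd_has[OF g'] by simp
qed

lemma pd_diff[simp]:
  assumes "f differentiable (at x)" "g differentiable (at x)"
  shows "pd (\<lambda>y. f y - g y) j x = pd f j x - pd g j x"
proof -
  obtain f' where f': "(f has_derivative f') (at x)" using assms by (auto simp: differentiable_def)
  obtain g' where g': "(g has_derivative g') (at x)" using assms by (auto simp: differentiable_def)
  show ?thesis using pd_has[OF has_derivative_diff[OF f' g']] pd_has[OF f'] pd_has[OF g'] by simp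
qed

lemma pd_minus[simp]:
  assumes "f differentiable (at x)"
  shows "pd (\<lambda>y. - f y) j x = - pd f j x"
proof -
  obtain f' where f': "(f has_derivative f') (at x)" using assms by (auto simp: differentiable_def)
  show ?thesis using pd_has[OF has_derivative_minus[OF f']] pd_has[OF f'] by simp
qed

lemma pd_sum[simp]:
  assumes "\<And>i. f i differentiable (at x)"
  shows "pd (\<lambda>y. \<Sum>i\<in>I. f i y) j x = (\<Sum>i\<in>I. pd (f i) j x)"
proof -
  define f' where "f' i = frechet_derivative (f i) (at x)" for i
  have f': "\<And>i. (f i has_derivative f' i) (at x)" using assms
    unfolding f'_def by (simp add: frechet_derivative_works)
  show ?thesis using pd_has[OF has_derivative_sum[of I f f', OF f']] pd_has[OF f'] by simp
qed

lemma pd_nth[simp]: "f differentiable (at x) \<Longrightarrow> pd (\<lambda>y. f y $ i) j x = pd f j x $ i"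
  using pd_lin[OF bounded_linear_vec_nth] by blast
lemma pd_of_real[simp]: "f differentiable (at x) \<Longrightarrow> pd (\<lambda>y. complex_of_real (f y)) j x = of_real (pd f j x)"
  using pd_lin[OF bounded_linear_of_real] by blast
lemma pd_cvec[simp]: "f differentiable (at x) \<Longrightarrow> pd (\<lambda>y. cvec (f y)) j x = cvec (pd f j x)"
  using pd_lin[OF lin_cvec] by blast
lemma pd_mult[simp]: "f differentiable (at x) \<Longrightarrow> g differentiable (at x) \<Longrightarrow>
   pd (\<lambda>y. f y * g y) j x = pd f j x * g x + f x * (pd g j x :: 'a::real_normed_algebra)"
  using pd_bil[OF bounded_bilinear_mult] by blast
lemma pd_scaleR[simp]: "f differentiable (at x) \<Longrightarrow> g differentiable (at x) \<Longrightarrow>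
   pd (\<lambda>y. f y *\<^sub>R g y) j x = pd f j x *\<^sub>R g x + f x *\<^sub>R (pd g j x :: 'a::real_normed_vector)"
  using pd_bil[OF bounded_bilinear_scaleR] by blast
lemma pd_inner[simp]: "f differentiable (at x) \<Longrightarrow> g differentiable (at x) \<Longrightarrow>
   pd (\<lambda>y. inner (f y) (g y)) j x = inner (pd f j x) (g x) + inner (f x) (pd g j x :: 'a::real_inner)"
  using pd_bil[OF bounded_bilinear_inner] by blast
lemma pd_crossv[simp]: "f differentiable (at x) \<Longrightarrow> g differentiable (at x) \<Longrightarrow>
   pd (\<lambda>y. crossv (f y) (g y :: real^3)) j x = crossv (pd f j x) (g x) + crossv (f x) (pd g j x)"
  using pd_bil[OF bil_crossv] by blast
lemma pd_outer[simp]: "f differentiable (at x) \<Longrightarrow> g differentiable (at x) \<Longrightarrow>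
   pd (\<lambda>y. outer (f y) (g y)) j x = outer (pd f j x) (g x) + outer (f x) (pd g j x)"
  using pd_bil[OF bil_outer] by blast

lemma d_nth[simp]: "f differentiable (at x) \<Longrightarrow> (\<lambda>y. f y $ i) differentiable (at x)"
  using lin_differentiable[OF bounded_linear_vec_nth] by blast
lemma d_of_real[simp]: "f differentiable (at x) \<Longrightarrow> (\<lambda>y. complex_of_real (f y)) differentiable (at x)"
  using lin_differentiable[OF bounded_linear_of_real] by blast
lemma d_cvec[simp]: "f differentiable (at x) \<Longrightarrow> (\<lambda>y. cvec (f y)) differentiable (at x)"
  using lin_differentiable[OF lin_cvec] by blast
lemma d_mult[simp]: "f differentiable (at x) \<Longrightarrow> g differentiable (at x) \<Longrightarrow>
   (\<lambda>y. f y * (g y :: 'a::real_normed_algebra)) differentiable (at x)"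
  using bil_differentiable[OF bounded_bilinear_mult] by blast
lemma d_scaleR[simp]: "f differentiable (at x) \<Longrightarrow> g differentiable (at x) \<Longrightarrow>
   (\<lambda>y. f y *\<^sub>R (g y :: 'a::real_normed_vector)) differentiable (at x)"
  using bil_differentiable[OF bounded_bilinear_scaleR] by blast
lemma d_inner[simp]: "f differentiable (at x) \<Longrightarrow> g differentiable (at x) \<Longrightarrow>
   (\<lambda>y. inner (f y) (g y :: 'a::real_inner)) differentiable (at x)"
  using bil_differentiable[OF bounded_bilinear_inner] by blast
lemma d_crossv[simp]: "f differentiable (at x) \<Longrightarrow> g differentiable (at x) \<Longrightarrow>
   (\<lambda>y. crossv (f y) (g y :: real^3)) differentiable (at x)"
  using bil_differentiable[OF bil_crossv] by blast
lemma d_outer[simp]: "f differentiable (at x) \<Longrightarrow> g differentiable (at x) \<Longrightarrow>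
   (\<lambda>y. outer (f y) (g y)) differentiable (at x)"
  using bil_differentiable[OF bil_outer] by blast
lemma d_sum[simp]: assumes "\<And>i. f i differentiable (at x)" shows "(\<lambda>y. \<Sum>i\<in>I. f i y) differentiable (at x)"
proof -
  define f' where "f' i = frechet_derivative (f i) (at x)" for i
  have f': "\<And>i. (f i has_derivative f' i) (at x)" using assms
    unfolding f'_def by (simp add: frechet_derivative_works)
  show ?thesis using has_derivative_sum[of I f f', OF f'] by (auto simp: differentiable_def)
qed




definition cc :: "real^3 \<Rightarrow> real^3 \<Rightarrow> complex^3" where
  "cc a b = (\<chi> i. complex_of_real (a$i) + \<i> * complex_of_real (b$i))"

definition EE :: "real \<Rightarrow> real^3 \<Rightarrow> real^3 \<Rightarrow> complex" where
  "EE c \<xi> y = exp (\<i> * complex_of_real (c + y \<bullet> \<xi>))"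

lemma E_has: "(EE c \<xi> has_derivative (\<lambda>h. EE c \<xi> x * (\<i> * complex_of_real (h \<bullet> \<xi>)))) (at x)"
proof -
  have "((\<lambda>y. \<i> * complex_of_real (c + y \<bullet> \<xi>)) has_derivative (\<lambda>h. \<i> * complex_of_real (h \<bullet> \<xi>))) (at x)"
    by (auto intro!: derivative_eq_intros)
  moreover have "(exp has_derivative (*) (exp (\<i> * complex_of_real (c + x \<bullet> \<xi>)))) (at (\<i> * complex_of_real (c + x \<bullet> \<xi>)))"
    using DERIV_exp unfolding has_field_derivative_def by blast
  ultimately show ?thesis unfolding EE_def[abs_def] using has_derivative_compose by fastforce
qed

lemma E_d[simp]: "EE c \<xi> differentiable (at x)"
  using E_has by (auto simp: differentiable_def)

lemma pd_E[simp]: "pd (EE c \<xi>) j x = EE c \<xi> x * (\<i> * complex_of_real (\<xi> $ j))"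
  using pd_has[OF E_has] by (simp add: inner_axis')

lemma pdE:
  assumes "f differentiable (at x)" "g differentiable (at x)"
  shows "pd (\<lambda>y. EE c \<xi> y * (complex_of_real (f y) + \<i> * complex_of_real (g y))) j x
    = EE c \<xi> x * (complex_of_real (pd f j x - \<xi>$j * g x) + \<i> * complex_of_real (\<xi>$j * f x + pd g j x))"
  using assms apply simp by (simp add: algebra_simps)


lemma cc_nth[simp]: "cc a b $ i = complex_of_real (a$i) + \<i> * complex_of_real (b$i)"
  by (simp add: cc_def)
lemma cscale_nth[simp]: "cscale c v $ i = c * v $ i"
  by (simp add: cscale_def)
lemma cvec_nth[simp]: "cvec v $ i = complex_of_real (v $ i)"
  by (simp add: cvec_def)

lemma curlE:
  assumes "a differentiable (at x)" "b differentiable (at x)"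
  shows "curl3 (\<lambda>y. cscale (EE c \<xi> y) (cc (a y) (b y))) x =
    cscale (EE c \<xi> x) (cc (curl3 a x - crossv \<xi> (b x)) (crossv \<xi> (a x) + curl3 b x))"
  unfolding curl3_def cscale_nth cc_nth
  using assms by (simp add: pdE vec_eq_iff forall_3 crossv_def algebra_simps)

lemma gradE:
  assumes "f differentiable (at x)" "g differentiable (at x)"
  shows "grad3 (\<lambda>y. EE c \<xi> y * (complex_of_real (f y) + \<i> * complex_of_real (g y))) x =
    cscale (EE c \<xi> x) (cc (grad3 f x - g x *\<^sub>R \<xi>) (f x *\<^sub>R \<xi> + grad3 g x))"
  unfolding grad3_def
  using assms by (simp add: pdE vec_eq_iff algebra_simps)

lemma divE:
  assumes "a differentiable (at x)" "b differentiable (at x)"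
  shows "div3 (\<lambda>y. cscale (EE c \<xi> y) (cc (a y) (b y))) x =
    EE c \<xi> x * (complex_of_real (div3 a x - \<xi> \<bullet> b x) + \<i> * complex_of_real (\<xi> \<bullet> a x + div3 b x))"
  unfolding div3_def cscale_nth cc_nth
  using assms by (simp add: pdE inner_vec_def sum_3 algebra_simps)

lemma cross_cc_cvec: "crossv (cscale e (cc a b)) (cvec h) = cscale e (cc (crossv a h) (crossv b h))"
  by (simp add: vec_eq_iff forall_3 crossv_def algebra_simps)
lemma cross_cvec_cc: "crossv (cvec h) (cscale e (cc a b)) = cscale e (cc (crossv h a) (crossv h b))"
  by (simp add: vec_eq_iff forall_3 crossv_def algebra_simps)
lemma cscale_cc_add: "cscale e (cc a b) + cscale e (cc a' b') = cscale e (cc (a + a') (b + b'))"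
  by (simp add: vec_eq_iff algebra_simps)
lemma curl_cvec:
  assumes "H differentiable (at x)"
  shows "curl3 (\<lambda>y. cvec (H y)) x = cvec (curl3 H x)"
  unfolding curl3_def cvec_nth using assms by (simp add: vec_eq_iff forall_3)

lemma E1_has: "((\<lambda>s::real. exp (\<i> * complex_of_real ((t + s) * \<tau> + c))) has_derivative
   (\<lambda>h. h *\<^sub>R (\<i> * complex_of_real \<tau> * exp (\<i> * complex_of_real (t * \<tau> + c))))) (at 0)"
proof -
  have "((\<lambda>s::real. \<i> * complex_of_real ((t + s) * \<tau> + c)) has_derivative (\<lambda>h. \<i> * complex_of_real (h * \<tau>))) (at 0)"
    by (auto intro!: derivative_eq_intros simp: algebra_simps)
  moreover have "(exp has_derivative (*) (exp (\<i> * complex_of_real ((t + 0) * \<tau> + c)))) (at (\<i> * complex_of_real ((t + 0) * \<tau> + c)))"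
    using DERIV_exp unfolding has_field_derivative_def by blast
  ultimately have "((\<lambda>s::real. exp (\<i> * complex_of_real ((t + s) * \<tau> + c))) has_derivative
     (\<lambda>h. exp (\<i> * complex_of_real ((t + 0) * \<tau> + c)) * (\<i> * complex_of_real (h * \<tau>)))) (at 0)"
    using has_derivative_compose by fastforce
  then show ?thesis
    by (rule has_derivative_eq_rhs) (simp add: fun_eq_iff scaleR_conv_of_real algebra_simps)
qed

lemma dt_E: "dt (\<lambda>t y. cscale (EE (t * \<tau>) \<xi> y) w) = (\<lambda>t y. cscale (EE (t * \<tau>) \<xi> y) (cscale (\<i> * complex_of_real \<tau>) w))"
proof (intro ext)
  fix t y
  have L: "bounded_linear (\<lambda>z. cscale z w)"
    using bounded_bilinear.bounded_linear_left[OF bil_cscale] .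
  have "((\<lambda>s. cscale (exp (\<i> * complex_of_real ((t + s) * \<tau> + y \<bullet> \<xi>))) w) has_derivative
     (\<lambda>h. cscale (h *\<^sub>R (\<i> * complex_of_real \<tau> * exp (\<i> * complex_of_real (t * \<tau> + y \<bullet> \<xi>)))) w)) (at 0)"
    using bounded_linear.has_derivative[OF L E1_has] .
  then have "((\<lambda>s. cscale (exp (\<i> * complex_of_real ((t + s) * \<tau> + y \<bullet> \<xi>))) w) has_vector_derivative
     (cscale (\<i> * complex_of_real \<tau> * exp (\<i> * complex_of_real (t * \<tau> + y \<bullet> \<xi>))) w)) (at 0)"
    unfolding has_vector_derivative_def
    by (rule has_derivative_eq_rhs) (simp add: fun_eq_iff linear_cmul[OF bounded_linear.linear[OF L]])
  then show "dt (\<lambda>t y. cscale (EE (t * \<tau>) \<xi> y) w) t y = cscale (EE (t * \<tau>) \<xi> y) (cscale (\<i> * complex_of_real \<tau>) w)"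
    unfolding dt_def EE_def
    by (subst vector_derivative_at) (auto simp: vec_eq_iff algebra_simps)
qed




lemma crossv_zero[simp]: "crossv 0 a = (0::real^3)" "crossv a 0 = (0::real^3)"
  by (simp_all add: crossv_def vec_eq_iff forall_3)

lemma vector_000[simp]: "(vector [0, 0, 0] :: real^3) = 0"
  by (simp add: vec_eq_iff forall_3)

definition cJ :: "(3 \<Rightarrow> real^3) \<Rightarrow> real^3" where
  "cJ d = vector [d 2 $ 3 - d 3 $ 2, d 3 $ 1 - d 1 $ 3, d 1 $ 2 - d 2 $ 1]"

lemma curl_cJ: "F differentiable (at x) \<Longrightarrow> curl3 F x = cJ (\<lambda>j. pd F j x)"
  unfolding curl3_def cJ_def by simp

lemma vector3_axis: "(vector [a, b, c] :: real^3) = a *\<^sub>R axis 1 1 + b *\<^sub>R axis 2 1 + c *\<^sub>R axis 3 1"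
  by (simp add: vec_eq_iff forall_3 axis_def)

lemma d_cJ[simp]: "(\<And>j. d j differentiable (at x)) \<Longrightarrow> (\<lambda>y. cJ (\<lambda>j. d j y)) differentiable (at x)"
  unfolding cJ_def vector3_axis by simp

lemma pd_cJ[simp]: "(\<And>j. d j differentiable (at x)) \<Longrightarrow> pd (\<lambda>y. cJ (\<lambda>j. d j y)) i x = cJ (\<lambda>j. pd (d j) i x)"
  unfolding cJ_def vector3_axis by simp


definition ReF where
  "ReF \<rho> p H \<gamma> x \<tau> \<xi> v = (\<rho> x * \<tau>^2) *\<^sub>R v - (\<gamma> * (p x * (\<xi> \<bullet> v))) *\<^sub>R \<xi>
     + grad3 (\<lambda>y. \<Sum>j\<in>UNIV. v$j * pd p j y) x
     + crossv (curl3 (\<lambda>y. curl3 (\<lambda>z. crossv v (H z)) y) x - crossv \<xi> (crossv \<xi> (crossv v (H x)))) (H x)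
     + crossv (curl3 H x) (curl3 (\<lambda>z. crossv v (H z)) x)"

definition ImF where
  "ImF p H \<gamma> x \<xi> v = (\<gamma> * (\<xi> \<bullet> v)) *\<^sub>R grad3 p x + (\<Sum>j\<in>UNIV. v$j * pd p j x) *\<^sub>R \<xi>
     + crossv (crossv \<xi> (curl3 (\<lambda>z. crossv v (H z)) x) + curl3 (\<lambda>z. crossv \<xi> (crossv v (H z))) x) (H x)
     + crossv (curl3 H x) (crossv \<xi> (crossv v (H x)))"

lemma cscale_cscale: "cscale a (cscale b w) = cscale (a * b) w"
  by (simp add: vec_eq_iff)

lemma Pop_form:
  assumes dH: "\<And>y. H differentiable (at y)" and dHj: "\<And>j y. pd H j differentiable (at y)"
    and dp: "\<And>y. p differentiable (at y)" and dpj: "\<And>j y. pd p j differentiable (at y)"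
  shows "Pop \<rho> p H \<gamma> (\<lambda>t y. cscale (exp (\<i> * complex_of_real (t * \<tau> + y \<bullet> \<xi>))) (cvec v)) 0 x
     = cscale (EE 0 \<xi> x) (cc (ReF \<rho> p H \<gamma> x \<tau> \<xi> v) (ImF p H \<gamma> x \<xi> v))"
proof -
  define \<beta> where "\<beta> = (\<lambda>t y. cscale (EE (t * \<tau>) \<xi> y) (cc v 0))"
  have beta: "(\<lambda>t y. cscale (exp (\<i> * complex_of_real (t * \<tau> + y \<bullet> \<xi>))) (cvec v)) = \<beta>"
    by (simp add: \<beta>_def EE_def cc_def cvec_def fun_eq_iff)
  have b0: "\<beta> 0 = (\<lambda>y. cscale (EE 0 \<xi> y) (cc v 0))" by (simp add: \<beta>_def)
  have T1: "cscale (- complex_of_real (\<rho> x)) (dt (dt \<beta>) 0 x) = cscale (EE 0 \<xi> x) (cc ((\<rho> x * \<tau>^2) *\<^sub>R v) 0)"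
    unfolding \<beta>_def dt_E by (simp add: vec_eq_iff power2_eq_square algebra_simps)
  have div: "div3 (\<beta> 0) y = EE 0 \<xi> y * (complex_of_real 0 + \<i> * complex_of_real (\<xi> \<bullet> v))" for y
    unfolding b0 using divE[of "\<lambda>y. v" y "\<lambda>y. 0" 0 \<xi>] by (simp add: div3_def)
  have g2: "grad3 (\<lambda>y. EE 0 \<xi> y * (complex_of_real 0 + \<i> * complex_of_real (p y * (\<xi> \<bullet> v)))) x
     = cscale (EE 0 \<xi> x) (cc (grad3 (\<lambda>y. 0) x - (p x * (\<xi> \<bullet> v)) *\<^sub>R \<xi>) (0 *\<^sub>R \<xi> + grad3 (\<lambda>y. p y * (\<xi> \<bullet> v)) x))"
    by (rule gradE) (simp_all add: dp)
  have T2: "cscale (complex_of_real \<gamma>) (grad3 (\<lambda>y. complex_of_real (p y) * div3 (\<beta> 0) y) x)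
     = cscale (EE 0 \<xi> x) (cc (- (\<gamma> * (p x * (\<xi> \<bullet> v))) *\<^sub>R \<xi>) ((\<gamma> * (\<xi> \<bullet> v)) *\<^sub>R grad3 p x))"
  proof -
    have "(\<lambda>y. complex_of_real (p y) * div3 (\<beta> 0) y) = (\<lambda>y. EE 0 \<xi> y * (complex_of_real 0 + \<i> * complex_of_real (p y * (\<xi> \<bullet> v))))"
      unfolding div by (simp add: fun_eq_iff algebra_simps)
    then show ?thesis using g2 dp by (simp add: vec_eq_iff grad3_def algebra_simps)
  qed
  have g3: "grad3 (\<lambda>y. EE 0 \<xi> y * (complex_of_real (\<Sum>j\<in>UNIV. v$j * pd p j y) + \<i> * complex_of_real 0)) x
     = cscale (EE 0 \<xi> x) (cc (grad3 (\<lambda>y. \<Sum>j\<in>UNIV. v$j * pd p j y) x - 0 *\<^sub>R \<xi>) ((\<Sum>j\<in>UNIV. v$j * pd p j x) *\<^sub>R \<xi> + grad3 (\<lambda>y. 0) x))"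
    by (rule gradE) (simp_all add: dpj)
  have T3: "grad3 (\<lambda>y. \<Sum>j\<in>UNIV. \<beta> 0 y $ j * complex_of_real (pd p j y)) x
     = cscale (EE 0 \<xi> x) (cc (grad3 (\<lambda>y. \<Sum>j\<in>UNIV. v$j * pd p j y) x) ((\<Sum>j\<in>UNIV. v$j * pd p j x) *\<^sub>R \<xi>))"
  proof -
    have "(\<lambda>y. \<Sum>j\<in>UNIV. \<beta> 0 y $ j * complex_of_real (pd p j y)) = (\<lambda>y. EE 0 \<xi> y * (complex_of_real (\<Sum>j\<in>UNIV. v$j * pd p j y) + \<i> * complex_of_real 0))"
      unfolding b0 by (simp add: fun_eq_iff sum_distrib_left algebra_simps)
    then show ?thesis using g3 by (simp add: vec_eq_iff grad3_def)
  qed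
  have bH: "(\<lambda>y. crossv (\<beta> 0 y) (cvec (H y))) = (\<lambda>y. cscale (EE 0 \<xi> y) (cc (crossv v (H y)) 0))"
    unfolding b0 by (simp add: fun_eq_iff cross_cc_cvec)
  have cG: "curl3 (\<lambda>z. crossv v (H z)) y = cJ (\<lambda>j. crossv v (pd H j y))" for y
    using dH by (simp add: curl_cJ)
  have c1: "curl3 (\<lambda>y. crossv (\<beta> 0 y) (cvec (H y))) y = cscale (EE 0 \<xi> y) (cc (curl3 (\<lambda>z. crossv v (H z)) y) (crossv \<xi> (crossv v (H y))))" for y
    unfolding bH using curlE[of "\<lambda>y. crossv v (H y)" y "\<lambda>y. 0" 0 \<xi>] dH by (simp add: curl3_def)
  have c2: "curl3 (\<lambda>y. cscale (EE 0 \<xi> y) (cc (curl3 (\<lambda>z. crossv v (H z)) y) (crossv \<xi> (crossv v (H y))))) x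
     = cscale (EE 0 \<xi> x) (cc (curl3 (\<lambda>y. curl3 (\<lambda>z. crossv v (H z)) y) x - crossv \<xi> (crossv \<xi> (crossv v (H x))))
           (crossv \<xi> (curl3 (\<lambda>z. crossv v (H z)) x) + curl3 (\<lambda>z. crossv \<xi> (crossv v (H z))) x))"
    by (rule curlE) (simp_all add: cG dH dHj)
  have T4: "crossv (curl3 (curl3 (\<lambda>y. crossv (\<beta> 0 y) (cvec (H y)))) x) (cvec (H x))
     = cscale (EE 0 \<xi> x) (cc (crossv (curl3 (\<lambda>y. curl3 (\<lambda>z. crossv v (H z)) y) x - crossv \<xi> (crossv \<xi> (crossv v (H x)))) (H x))
          (crossv (crossv \<xi> (curl3 (\<lambda>z. crossv v (H z)) x) + curl3 (\<lambda>z. crossv \<xi> (crossv v (H z))) x) (H x)))"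
  proof -
    have "curl3 (\<lambda>y. crossv (\<beta> 0 y) (cvec (H y))) = (\<lambda>y. cscale (EE 0 \<xi> y) (cc (curl3 (\<lambda>z. crossv v (H z)) y) (crossv \<xi> (crossv v (H y)))))"
      using c1 by (simp add: fun_eq_iff)
    then show ?thesis using c2 by (simp add: cross_cc_cvec)
  qed
  have T5: "crossv (curl3 (\<lambda>y. cvec (H y)) x) (curl3 (\<lambda>y. crossv (\<beta> 0 y) (cvec (H y))) x)
     = cscale (EE 0 \<xi> x) (cc (crossv (curl3 H x) (curl3 (\<lambda>z. crossv v (H z)) x)) (crossv (curl3 H x) (crossv \<xi> (crossv v (H x)))))"
    unfolding c1 curl_cvec[OF dH] cross_cvec_cc ..
  show ?thesis
    unfolding beta Pop_def T1 T2 T3 T4 T5 cscale_cc_add ReF_def ImF_def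
    by (simp add: algebra_simps)
qed


lemma axis_cvec: "(axis k 1 :: complex^3) = cvec (axis k 1)"
  by (simp add: vec_eq_iff axis_def)

lemma fullsym_form:
  assumes dH: "\<And>y. H differentiable (at y)" and dHj: "\<And>j y. pd H j differentiable (at y)"
    and dp: "\<And>y. p differentiable (at y)" and dpj: "\<And>j y. pd p j differentiable (at y)"
  shows "fullsym \<rho> p H \<gamma> x \<tau> \<xi> = (\<chi> i k. cc (ReF \<rho> p H \<gamma> x \<tau> \<xi> (axis k 1)) (ImF p H \<gamma> x \<xi> (axis k 1)) $ i)"
proof -
  have e: "exp (- \<i> * complex_of_real (x \<bullet> \<xi>)) * (EE 0 \<xi> x * z) = z" for z
    by (simp add: EE_def mult.assoc[symmetric] exp_add[symmetric])
  show ?thesis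
    unfolding fullsym_def axis_cvec Pop_form[OF dH dHj dp dpj] cscale_nth e ..
qed

lemma crossv_neg[simp]: "crossv (- a) b = - crossv a (b::real^3)" "crossv a (- b) = - crossv a (b::real^3)"
  by (simp_all add: crossv_def vec_eq_iff forall_3)

lemma crossv_add[simp]: "crossv (a + b) c = crossv a c + crossv b (c::real^3)" "crossv c (a + b) = crossv c a + crossv c (b::real^3)"
  by (simp_all add: crossv_def vec_eq_iff forall_3 algebra_simps)
lemma crossv_diff[simp]: "crossv (a - b) c = crossv a c - crossv b (c::real^3)" "crossv c (a - b) = crossv c a - crossv c (b::real^3)"
  by (simp_all add: crossv_def vec_eq_iff forall_3 algebra_simps)

lemma scaleR_cmat_nth: "(c *\<^sub>R (M::complex^3^3)) $ i $ k = complex_of_real c * M $ i $ k"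
  unfolding vector_scaleR_component by (simp add: scaleR_conv_of_real)

lemma cJ_neg: "cJ (\<lambda>j. - d j) = - cJ d"
  by (simp add: cJ_def vec_eq_iff forall_3)

lemma curl_cross2:
  assumes dH: "\<And>y. H differentiable (at y)"
  shows "curl3 (\<lambda>z. crossv a (crossv v (H z))) x = cJ (\<lambda>j. crossv a (crossv v (pd H j x)))"
  using dH by (simp add: curl_cJ)

lemma ReF_even: "ReF \<rho> p H \<gamma> x (-\<tau>) (-\<xi>) v = ReF \<rho> p H \<gamma> x \<tau> \<xi> v"
  by (simp add: ReF_def)

lemma ImF_odd:
  assumes dH: "\<And>y. H differentiable (at y)"
  shows "ImF p H \<gamma> x (-\<xi>) v = - ImF p H \<gamma> x \<xi> v"
  unfolding ImF_def curl_cross2[OF dH] by (simp add: cJ_neg algebra_simps)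

lemma p1sym_form:
  assumes dH: "\<And>y. H differentiable (at y)" and dHj: "\<And>j y. pd H j differentiable (at y)"
    and dp: "\<And>y. p differentiable (at y)" and dpj: "\<And>j y. pd p j differentiable (at y)"
  shows "p1sym \<rho> p H \<gamma> x \<tau> \<xi> = (\<chi> i k. \<i> * complex_of_real (ImF p H \<gamma> x \<xi> (axis k 1) $ i))"
  unfolding p1sym_def fullsym_form[OF dH dHj dp dpj] ReF_even ImF_odd[OF dH]
  apply (simp add: vec_eq_iff scaleR_cmat_nth algebra_simps)
  by (simp add: scaleR_conv_of_real)

lemma psub_form:
  assumes dH: "\<And>y. H differentiable (at y)" and dHj: "\<And>j y. pd H j differentiable (at y)"
    and dp: "\<And>y. p differentiable (at y)" and dpj: "\<And>j y. pd p j differentiable (at y)"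
  shows "psub \<rho> p H \<gamma> x \<tau> \<xi> = (\<chi> i k. \<i> * complex_of_real (ImF p H \<gamma> x \<xi> (axis k 1) $ i
     + (\<Sum>j\<in>UNIV. pd (\<lambda>y. pd (\<lambda>\<eta>. p2sym \<rho> p H \<gamma> y \<tau> \<eta>) j \<xi>) j x) $ i $ k / 2))"
  unfolding psub_def p1sym_form[OF dH dHj dp dpj]
  by (simp add: vec_eq_iff cmscale_def cmat_def field_simps)




definition Qe where
  "Qe \<rho> p H \<gamma> \<xi> y j = (- (2 * (H y \<bullet> \<xi>) * H y $ j)) *\<^sub>R mat 1
     - (\<gamma> * p y + H y \<bullet> H y) *\<^sub>R (outer (axis j 1) \<xi> + outer \<xi> (axis j 1))
     + (H y $ j) *\<^sub>R (outer \<xi> (H y) + outer (H y) \<xi>)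
     + (H y \<bullet> \<xi>) *\<^sub>R (outer (axis j 1) (H y) + outer (H y) (axis j 1))"

lemma Q_form: "pd (\<lambda>\<eta>. p2sym \<rho> p H \<gamma> y \<tau> \<eta>) j \<xi> = Qe \<rho> p H \<gamma> \<xi> y j"
  unfolding p2sym_def power2_norm_eq_inner power2_eq_square Qe_def
  apply (simp add: inner_axis inner_axis' power2_norm_eq_inner)
  by (simp add: vec_eq_iff outer_def algebra_simps inner_commute dot_square_norm power2_eq_square)


lemma mat1_nth: "(mat 1 :: real^3^3) $ i $ k = (if i = k then 1 else 0)"
  by (simp add: mat_def)

lemma curl_cross1:
  assumes dH: "\<And>y. H differentiable (at y)"
  shows "curl3 (\<lambda>z. crossv v (H z)) x = cJ (\<lambda>j. crossv v (pd H j x))"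
  using dH by (simp add: curl_cJ)

lemma M_antisym:
  assumes dH: "\<And>y. H differentiable (at y)" and dp: "\<And>y. p differentiable (at y)"
    and eq: "grad3 p x + crossv (H x) (curl3 H x) = 0"
  shows "ImF p H \<gamma> x \<xi> (axis b 1) $ a + (\<Sum>j\<in>UNIV. pd (\<lambda>y. pd (\<lambda>\<eta>. p2sym \<rho> p H \<gamma> y \<tau> \<eta>) j \<xi>) j x) $ a $ b / 2
     + (ImF p H \<gamma> x \<xi> (axis a 1) $ b + (\<Sum>j\<in>UNIV. pd (\<lambda>y. pd (\<lambda>\<eta>. p2sym \<rho> p H \<gamma> y \<tau> \<eta>) j \<xi>) j x) $ b $ a / 2) = 0"
proof -
  have P: "pd p j x = - (crossv (H x) (cJ (\<lambda>j. pd H j x))) $ j" for j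
  proof -
    have "grad3 p x $ j + crossv (H x) (curl3 H x) $ j = 0" using eq by (simp add: vec_eq_iff)
    then show ?thesis using curl_cJ[OF dH] by (simp add: grad3_def algebra_simps)
  qed
  have S: "pd (\<lambda>y. Qe \<rho> p H \<gamma> \<xi> y j) j x $ c $ d =
     - (2 * ((pd H j x \<bullet> \<xi>) * H x $ j + (H x \<bullet> \<xi>) * pd H j x $ j)) * (if c = d then 1 else 0)
     - (\<gamma> * pd p j x + 2 * (H x \<bullet> pd H j x)) * (axis j 1 $ c * \<xi> $ d + \<xi> $ c * axis j 1 $ d)
     - (\<gamma> * p x + H x \<bullet> H x) * 0
     + pd H j x $ j * (\<xi> $ c * H x $ d + H x $ c * \<xi> $ d)
     + H x $ j * (\<xi> $ c * pd H j x $ d + pd H j x $ c * \<xi> $ d)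
     + (pd H j x \<bullet> \<xi>) * (axis j 1 $ c * H x $ d + H x $ c * axis j 1 $ d)
     + (H x \<bullet> \<xi>) * (axis j 1 $ c * pd H j x $ d + pd H j x $ c * axis j 1 $ d)" for j c d
    unfolding Qe_def using dH dp
    apply simp
    by (simp add: outer_def mat1_nth algebra_simps inner_commute)
  show ?thesis
    unfolding Q_form ImF_def curl_cJ[OF dH] curl_cross2[OF dH] curl_cross1[OF dH]
    using dH
    apply (simp add: sum_3 S P grad3_def)
    apply (insert exhaust_3[of a] exhaust_3[of b])
    apply (elim disjE)
    apply (simp_all add: S crossv_def cJ_def inner_vec_def sum_3 axis_def algebra_simps)
    done
qed




lemma rank1_gen:
  fixes h \<xi> :: "real^3" and r s a nh nx gp :: real
  assumes a: "a = gp + nh" and quad: "r^2 - a * nx * r + gp * s^2 * nx = 0"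
    and rs: "r \<noteq> s^2" and d: "s^2 * nx \<noteq> 0"
  shows "(a *\<^sub>R outer \<xi> \<xi> - s *\<^sub>R (outer \<xi> h + outer h \<xi>))
     + (s^2 / (r - s^2)) *\<^sub>R (nh *\<^sub>R outer \<xi> \<xi> + nx *\<^sub>R outer h h - s *\<^sub>R (outer h \<xi> + outer \<xi> h))
     = (1 / ((r - s^2) * (s^2 * nx))) *\<^sub>R outer ((- r * s) *\<^sub>R \<xi> + (s^2 * nx) *\<^sub>R h) ((- r * s) *\<^sub>R \<xi> + (s^2 * nx) *\<^sub>R h)"
proof -
  define A where "A = a *\<^sub>R outer \<xi> \<xi> - s *\<^sub>R (outer \<xi> h + outer h \<xi>)"
  define W where "W = nh *\<^sub>R outer \<xi> \<xi> + nx *\<^sub>R outer h h - s *\<^sub>R (outer h \<xi> + outer \<xi> h)"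
  define u where "u = (- r * s) *\<^sub>R \<xi> + (s^2 * nx) *\<^sub>R h"
  have rs': "r - s^2 \<noteq> 0" using rs by simp
  have key: "(r - s^2) * (s^2 * nx) * (a * \<xi>$i * \<xi>$k - s * (\<xi>$i * h$k + h$i * \<xi>$k))
     + s^2 * (s^2 * nx) * (nh * \<xi>$i * \<xi>$k + nx * h$i * h$k - s * (h$i * \<xi>$k + \<xi>$i * h$k))
     = ((- r * s) * \<xi>$i + (s^2 * nx) * h$i) * ((- r * s) * \<xi>$k + (s^2 * nx) * h$k)
       - \<xi>$i * \<xi>$k * s^2 * (r^2 - a * nx * r + gp * s^2 * nx)" for i k
    unfolding a by (simp add: algebra_simps power2_eq_square)
  have E: "((r - s^2) * (s^2 * nx)) *\<^sub>R A + (s^2 * (s^2 * nx)) *\<^sub>R W = outer u u"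
    using key unfolding quad A_def W_def u_def
    by (simp add: vec_eq_iff outer_def algebra_simps)
  have "A + (s^2 / (r - s^2)) *\<^sub>R W = (1 / ((r - s^2) * (s^2 * nx))) *\<^sub>R (((r - s^2) * (s^2 * nx)) *\<^sub>R A + (s^2 * (s^2 * nx)) *\<^sub>R W)"
  proof -
    have s1: "1 / ((r - s^2) * (s^2 * nx)) * ((r - s^2) * (s^2 * nx)) = 1" using rs' d by simp
    have s2: "1 / ((r - s^2) * (s^2 * nx)) * (s^2 * (s^2 * nx)) = s^2 / (r - s^2)" using rs' d
      by (simp add: field_simps power2_eq_square)
    show ?thesis by (simp only: scaleR_add_right scaleR_scaleR s1 s2 scaleR_one)
  qed
  then show ?thesis unfolding E by (simp add: A_def W_def u_def)
qed


lemma inner3: "(u::real^3) \<bullet> v = u$1 * v$1 + u$2 * v$2 + u$3 * v$3"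
  by (simp add: inner_vec_def sum_3)

lemma lagrange: "crossv \<xi> (h::real^3) \<bullet> crossv \<xi> h = (\<xi> \<bullet> \<xi>) * (h \<bullet> h) - (h \<bullet> \<xi>)^2"
  unfolding inner3 by (simp add: crossv_def power2_eq_square algebra_simps)

lemma wsq_alt: "wsq H x \<xi> = (H x \<bullet> H x) *\<^sub>R outer \<xi> \<xi> + (\<xi> \<bullet> \<xi>) *\<^sub>R outer (H x) (H x)
       - (H x \<bullet> \<xi>) *\<^sub>R (outer (H x) \<xi> + outer \<xi> (H x))"
  by (simp add: wsq_def power2_norm_eq_inner)

lemma proj1_rank1:
  assumes n: "crossv \<xi> (H x) \<noteq> 0"
  shows "proj \<rho> p H \<gamma> 1 x \<xi> = (1 / (crossv \<xi> (H x) \<bullet> crossv \<xi> (H x))) *\<^sub>R outer (crossv \<xi> (H x)) (crossv \<xi> (H x))"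
proof -
  define n where "n = crossv \<xi> (H x)"
  have nn: "n \<bullet> n \<noteq> 0" using n unfolding n_def by simp
  have L: "(H x \<bullet> \<xi>)^2 - (norm (H x))^2 * (norm \<xi>)^2 = - (n \<bullet> n)"
    unfolding n_def lagrange power2_norm_eq_inner by simp
  have M: "(n \<bullet> n) *\<^sub>R mat 1 - wsq H x \<xi> = outer n n"
    unfolding n_def wsq_alt inner3
    by (simp add: vec_eq_iff forall_3 outer_def mat_def inner3 crossv_def algebra_simps power2_eq_square)
  have "proj \<rho> p H \<gamma> 1 x \<xi> = mat 1 + (1 / (- (n \<bullet> n))) *\<^sub>R wsq H x \<xi>"
    by (simp add: proj_def Let_def L)
  also have "\<dots> = (1 / (n \<bullet> n)) *\<^sub>R ((n \<bullet> n) *\<^sub>R mat 1 - wsq H x \<xi>)"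
    using nn by (simp add: scaleR_diff_right)
  finally show ?thesis using M unfolding n_def by simp
qed


lemma quad_root:
  assumes rho: "\<rho> x > 0" and cpos: "csq \<rho> p \<gamma> x > 0"
    and r: "r = \<rho> x * cssq \<rho> p H \<gamma> x \<xi> \<or> r = \<rho> x * cfsq \<rho> p H \<gamma> x \<xi>"
  shows "r^2 - (\<gamma> * p x + H x \<bullet> H x) * (\<xi> \<bullet> \<xi>) * r + \<gamma> * p x * (H x \<bullet> \<xi>)^2 * (\<xi> \<bullet> \<xi>) = 0"
proof -
  define c where "c = csq \<rho> p \<gamma> x"
  define hq where "hq = hsq \<rho> H x"
  define bq where "bq = bsq \<rho> H x \<xi>"
  define D where "D = discr \<rho> p H \<gamma> x \<xi>"
  define nx where "nx = \<xi> \<bullet> \<xi>"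
  define R where "R = \<rho> x"
  have R0: "R \<noteq> 0" using rho unfolding R_def by simp
  have gp: "\<gamma> * p x = R * c" unfolding c_def csq_def R_def using rho by simp
  have nh: "H x \<bullet> H x = R * hq" unfolding hq_def hsq_def R_def using rho by (simp add: power2_norm_eq_inner)
  have s2: "(H x \<bullet> \<xi>)^2 = nx * (R * hq) - R * bq"
    unfolding bq_def bsq_def R_def nx_def using rho lagrange[of \<xi> "H x"] nh[unfolded R_def]
    by (simp add: power2_norm_eq_inner)
  have bq0: "bq \<ge> 0" unfolding bq_def bsq_def using rho by simp
  have arg: "(c - hq)^2 * nx^2 + 4 * bq * c * nx \<ge> 0"
    using bq0 cpos unfolding c_def nx_def by (simp add: inner_ge_zero)
  have n2: "(norm \<xi>)^2 = nx" by (simp add: nx_def power2_norm_eq_inner)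
  have n4: "(norm \<xi>)^4 = nx^2"
  proof -
    have "(norm \<xi>)^4 = ((norm \<xi>)^2)^2" by simp
    then show ?thesis using n2 by simp
  qed
  have D2: "D^2 = (c - hq)^2 * nx^2 + 4 * bq * c * nx"
    unfolding D_def discr_def c_def[symmetric] hq_def[symmetric] bq_def[symmetric] n2 n4
    using arg by simp
  have rr: "r = R * (((c + hq) * nx - D) / 2) \<or> r = R * (((c + hq) * nx + D) / 2)"
    using r unfolding cssq_def cfsq_def R_def c_def hq_def D_def nx_def by (simp add: power2_norm_eq_inner)
  have G: "t^2 - (R * c + R * hq) * nx * t + R * c * (nx * (R * hq) - R * bq) * nx
     = R^2 / 4 * (D^2 - ((c - hq)^2 * nx^2 + 4 * bq * c * nx))"
    if "t = R * (((c + hq) * nx - D) / 2) \<or> t = R * (((c + hq) * nx + D) / 2)" for t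
    using that apply (elim disjE)
    apply (hypsubst, simp add: field_simps power2_eq_square)
    by (hypsubst, simp add: field_simps power2_eq_square)
  have "r^2 - (\<gamma> * p x + H x \<bullet> H x) * (\<xi> \<bullet> \<xi>) * r + \<gamma> * p x * (H x \<bullet> \<xi>)^2 * (\<xi> \<bullet> \<xi>)
     = R^2 / 4 * (D^2 - ((c - hq)^2 * nx^2 + 4 * bq * c * nx))"
    unfolding gp nh s2 nx_def[symmetric] using G[OF rr] .
  then show ?thesis unfolding D2 by simp
qed


lemma proj23_rank1:
  assumes rho: "\<rho> x > 0" and cpos: "csq \<rho> p \<gamma> x > 0"
    and xiH: "\<xi> \<bullet> H x \<noteq> 0" and xixH: "crossv \<xi> (H x) \<noteq> 0" and j: "j = 2 \<or> j = 3"
  shows "\<exists>c u. proj \<rho> p H \<gamma> j x \<xi> = c *\<^sub>R outer u u"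
proof -
  define s where "s = H x \<bullet> \<xi>"
  define nx where "nx = \<xi> \<bullet> \<xi>"
  define nh where "nh = H x \<bullet> H x"
  define gp where "gp = \<gamma> * p x"
  define rs where "rs = \<rho> x * cssq \<rho> p H \<gamma> x \<xi>"
  define rf where "rf = \<rho> x * cfsq \<rho> p H \<gamma> x \<xi>"
  have s0: "s \<noteq> 0" using xiH unfolding s_def by (simp add: inner_commute)
  have nx0: "nx \<noteq> 0" using xiH unfolding nx_def by auto
  have d: "s^2 * nx \<noteq> 0" using s0 nx0 by simp
  have lag: "crossv \<xi> (H x) \<bullet> crossv \<xi> (H x) = nx * nh - s^2"
    unfolding nx_def nh_def s_def lagrange ..
  have nn: "crossv \<xi> (H x) \<bullet> crossv \<xi> (H x) \<noteq> 0" using xixH by simp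
  have ne: "r \<noteq> s^2" if q: "r^2 - (gp + nh) * nx * r + gp * s^2 * nx = 0" for r
  proof
    assume "r = s^2"
    then have "s^2 * (s^2 - nh * nx) = 0" using q by (simp add: algebra_simps power2_eq_square)
    then have "s^2 = nh * nx" using s0 by simp
    then show False using nn lag by (simp add: algebra_simps)
  qed
  have main: "\<exists>c u. c' *\<^sub>R ((gp + nh) *\<^sub>R outer \<xi> \<xi> - s *\<^sub>R (outer \<xi> (H x) + outer (H x) \<xi>)
     + (s^2 / (r - s^2)) *\<^sub>R wsq H x \<xi>) = c *\<^sub>R outer u u"
    if r: "r = rs \<or> r = rf" for r c'
  proof -
    have q: "r^2 - (gp + nh) * nx * r + gp * s^2 * nx = 0"
      using quad_root[OF rho cpos, of r H \<xi>] r unfolding rs_def rf_def gp_def nh_def nx_def s_def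
      by blast
    show ?thesis
      unfolding wsq_alt nh_def[symmetric] nx_def[symmetric] s_def[symmetric]
        rank1_gen[where gp = gp, OF refl q ne[OF q] d] scaleR_scaleR by blast
  qed
  show ?thesis using j
  proof
    assume "j = 2"
    then show ?thesis using main[of rs "1 / (rs - rf)"]
      unfolding proj_def Let_def rs_def[symmetric] rf_def[symmetric] power2_norm_eq_inner
        gp_def[symmetric] nh_def[symmetric] s_def[symmetric] by simp
  next
    assume "j = 3"
    then show ?thesis using main[of rf "1 / (rf - rs)"]
      unfolding proj_def Let_def rs_def[symmetric] rf_def[symmetric] power2_norm_eq_inner
        gp_def[symmetric] nh_def[symmetric] s_def[symmetric] by simp
  qed
qed


lemma final_alg:
  fixes Ps :: "complex^3^3" and M :: "3 \<Rightarrow> 3 \<Rightarrow> real"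
  assumes Ps: "\<And>i k. Ps $ i $ k = \<i> * complex_of_real (M i k)" and anti: "\<And>i k. M i k + M k i = 0"
  shows "cmat (c *\<^sub>R outer u u) ** Ps ** cmat (c *\<^sub>R outer u u) = 0"
proof -
  have m: "M i i = 0" for i using anti[of i i] by simp
  have m2: "M 2 1 = - M 1 2" "M 3 1 = - M 1 3" "M 3 2 = - M 2 3"
    using anti[of 2 1] anti[of 3 1] anti[of 3 2] by (simp_all add: algebra_simps)
  show ?thesis
    by (simp add: vec_eq_iff matrix_matrix_mult_def sum_3 cmat_def outer_def Ps m m2 algebra_simps)
qed

lemma ptilde_eq:
  assumes "qfac \<rho> p H \<gamma> j x \<tau> \<xi> = 0"
  shows "ptilde \<rho> p H \<gamma> j x \<tau> \<xi> = proj \<rho> p H \<gamma> j x \<xi>"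
  unfolding ptilde_def assms by simp

lemma smooth_d: "smooth3 f \<Longrightarrow> f differentiable (at y)"
  unfolding smooth3_def using pderivs.base by blast
lemma smooth_dj: "smooth3 f \<Longrightarrow> pd f j differentiable (at y)"
  unfolding smooth3_def using pderivs.step[OF pderivs.base, of f j] by blast

theorem lemma5p4:
  fixes \<rho> p :: "real^3 \<Rightarrow> real" and H :: "real^3 \<Rightarrow> real^3" and \<gamma> :: real
    and j :: nat and x :: "real^3" and \<tau> :: real and \<xi> :: "real^3"
  assumes smooth_rho: "smooth3 \<rho>" and smooth_p: "smooth3 p" and smooth_H: "smooth3 H"
    and rho_pos: "\<forall>y. \<rho> y > 0"
    and equilibrium: "\<forall>y. grad3 p y + crossv (H y) (curl3 H y) = 0"
    and c_pos: "\<forall>y. csq \<rho> p \<gamma> y > 0"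
    and H_pos: "\<forall>y. 0 < (norm (H y))^2"
    and H_ne: "\<forall>y. (norm (H y))^2 \<noteq> \<rho> y * csq \<rho> p \<gamma> y"
    and xiH: "\<xi> \<bullet> H x \<noteq> 0"
    and xixH: "crossv \<xi> (H x) \<noteq> 0"
    and j: "j \<in> {1, 2, 3}"
    and char: "qfac \<rho> p H \<gamma> j x \<tau> \<xi> = 0"
  shows "cmat (ptilde \<rho> p H \<gamma> j x \<tau> \<xi>) ** psub \<rho> p H \<gamma> x \<tau> \<xi> ** cmat (proj \<rho> p H \<gamma> j x \<xi>) = 0"
proof -
  have dH: "\<And>y. H differentiable (at y)" and dHj: "\<And>j y. pd H j differentiable (at y)"
    and dp: "\<And>y. p differentiable (at y)" and dpj: "\<And>j y. pd p j differentiable (at y)"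
    using smooth_d smooth_dj smooth_H smooth_p by blast+
  define M where "M i k = ImF p H \<gamma> x \<xi> (axis k 1) $ i
     + (\<Sum>j\<in>UNIV. pd (\<lambda>y. pd (\<lambda>\<eta>. p2sym \<rho> p H \<gamma> y \<tau> \<eta>) j \<xi>) j x) $ i $ k / 2" for i k
  have Ps: "psub \<rho> p H \<gamma> x \<tau> \<xi> $ i $ k = \<i> * complex_of_real (M i k)" for i k
    unfolding psub_form[OF dH dHj dp dpj] M_def by simp
  have anti: "M i k + M k i = 0" for i k
    unfolding M_def using M_antisym[OF dH dp, of x \<gamma> \<xi> k i \<rho> \<tau>] equilibrium by simp
  have "\<exists>c u. proj \<rho> p H \<gamma> j x \<xi> = c *\<^sub>R outer u u"
  proof (cases "j = 1")
    case True
    then show ?thesis using proj1_rank1[of \<xi> H x \<rho> p \<gamma>] xixH by blast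
  next
    case False
    then have "j = 2 \<or> j = 3" using j by auto
    then show ?thesis using proj23_rank1[of \<rho> x p \<gamma> \<xi> H j] rho_pos c_pos xiH xixH by blast
  qed
  then obtain c u where cu: "proj \<rho> p H \<gamma> j x \<xi> = c *\<^sub>R outer u u" by blast
  show ?thesis
    unfolding ptilde_eq[OF char] cu using final_alg[OF Ps anti] .
qed


end
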